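(* Let $X$ and $Y$ be separable Banach spaces and assume $X$ is a quotient of $Y$ (there is a bounded linear operator from $Y$ onto $X$). Then $\phi_{\mathrm{NC}_{\ell_1}}(X)\le\phi_{\mathrm{NC}_{\ell_1}}(Y)$.
   Context: Bourgain's $\ell_1$ index: for a separable Banach space $Y$ and $\delta\ge1$, let $\mathbf{T}(Y,\delta)$ be the tree of all finite sequences $(y_n)_{n=0}^k$ in $Y$ (including the empty sequence) such that $\frac1\delta\sum_{n=0}^k|a_n|\le\|\sum_{n=0}^k a_ny_n\|\le\delta\sum_{n=0}^k|a_n|$ for all reals $a_0,\dots,a_k$. For a well-founded tree $T$, $T'=\{s\in T:\exists t\in T,\ s\sqsubset t\}$, iterated derivatives $T^\xi$ are defined by transfinite recursion (intersections at limits), and $o(T)$ is the least $\xi$ with $T^\xi=\emptyset$. Set $\phi_{\mathrm{NC}_{\ell_1}}(Y)=\omega_1$ if $Y$ contains an isomorphic copy of $\ell_1$, and otherwise $\phi_{\mathrm{NC}_{\ell_1}}(Y)=\sup_{\delta\ge1}o(\mathbf{T}(Y,\delta))$. *)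

theory Defs
  imports "HOL-Analysis.Analysis" "HOL-Library.Sublist"
begin

(* Bourgain's l_1 tree T(Y,delta): finite sequences (lists) (y_0,...,y_k) that are
   delta-equivalent to the unit vector basis of l_1^{k+1}; the empty list is included. *)
definition l1_tree :: "real \<Rightarrow> ('y::real_normed_vector) list set" where
  "l1_tree \<delta> = {ys. \<forall>a::nat \<Rightarrow> real.
      (1/\<delta>) * (\<Sum>n<length ys. \<bar>a n\<bar>) \<le> norm (\<Sum>n<length ys. a n *\<^sub>R ys ! n)
    \<and> norm (\<Sum>n<length ys. a n *\<^sub>R ys ! n) \<le> \<delta> * (\<Sum>n<length ys. \<bar>a n\<bar>)}"

definition tree_deriv :: "'a list set \<Rightarrow> 'a list set" where
  "tree_deriv T = {s \<in> T. \<exists>t\<in>T. strict_prefix s t}"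

(* Iterated derivatives T^xi, indexed along a well-order r: for i in Field r, the stage
   deriv_iter r T i is T^xi where xi is the order type of the initial segment of r below i.
   Uniform transfinite recursion: T^xi = T \<inter> \<Inter>_{eta<xi} (T^eta)'
   (gives T^0 = T, T^(eta+1) = (T^eta)', T^lambda = \<Inter>_{eta<lambda} T^eta). *)
definition deriv_iter :: "'i rel \<Rightarrow> 'a list set \<Rightarrow> 'i \<Rightarrow> 'a list set" where
  "deriv_iter r T = wfrec (r - Id) (\<lambda>f i. T \<inter> (\<Inter>j\<in>{j. (j, i) \<in> r - Id}. tree_deriv (f j)))"

(* o(T) \<le> otype r, i.e. T^(otype r) = {} *)
definition rank_le :: "'a list set \<Rightarrow> 'i rel \<Rightarrow> bool" where
  "rank_le T r \<longleftrightarrow> T \<inter> (\<Inter>j\<in>Field r. tree_deriv (deriv_iter r T j)) = {}"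

definition l1_seqs :: "(nat \<Rightarrow> real) set" where
  "l1_seqs = {x. summable (\<lambda>n. \<bar>x n\<bar>)}"

definition l1_norm :: "(nat \<Rightarrow> real) \<Rightarrow> real" where
  "l1_norm x = (\<Sum>n. \<bar>x n\<bar>)"

definition contains_l1 :: "'y::real_normed_vector itself \<Rightarrow> bool" where
  "contains_l1 _ \<longleftrightarrow> (\<exists>(E::(nat \<Rightarrow> real) \<Rightarrow> 'y) c. c > 0 \<and>
      (\<forall>x\<in>l1_seqs. \<forall>y\<in>l1_seqs. E (\<lambda>n. x n + y n) = E x + E y) \<and>
      (\<forall>x\<in>l1_seqs. \<forall>a. E (\<lambda>n. a * x n) = a *\<^sub>R E x) \<and>
      (\<forall>x\<in>l1_seqs. c * l1_norm x \<le> norm (E x) \<and> norm (E x) \<le> l1_norm x / c))"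

(* phi_NC_l1(Y) \<le> otype r, for a well-order r; omega_1 is represented by cardSuc natLeq *)
definition phi_l1_le :: "'y::real_normed_vector itself \<Rightarrow> 'i rel \<Rightarrow> bool" where
  "phi_l1_le Y r \<longleftrightarrow>
     (if contains_l1 Y then (cardSuc natLeq, r) \<in> ordLeq
      else (\<forall>\<delta>\<ge>1. rank_le (l1_tree \<delta> :: 'y list set) r))"

end

theory Submission
  imports Defs
begin


lemma wf_WO: "Well_order r \<Longrightarrow> wf (r - Id)"
  by (simp add: well_order_on_def)

lemma deriv_iter_unfold:
  assumes "Well_order r"
  shows "deriv_iter r T i = T \<inter> (\<Inter>j\<in>{j. (j, i) \<in> r - Id}. tree_deriv (deriv_iter r T j))"
  unfolding deriv_iter_def
  apply (subst wfrec[OF wf_WO[OF assms]])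
  apply (simp add: cut_def)
  done

lemma stage_mem:
  assumes "Well_order r"
  shows "s \<in> deriv_iter r T i \<longleftrightarrow> s \<in> T \<and> (\<forall>j. (j, i) \<in> r - Id \<longrightarrow> s \<in> tree_deriv (deriv_iter r T j))"
proof -
  have eq: "deriv_iter r T i = T \<inter> (\<Inter>j\<in>{j. (j, i) \<in> r - Id}. tree_deriv (deriv_iter r T j))"
    by (rule deriv_iter_unfold[OF assms])
  show ?thesis unfolding eq by simp
qed

lemma stage_sub: "Well_order r \<Longrightarrow> deriv_iter r T i \<subseteq> T"
  by (subst deriv_iter_unfold) auto

lemma uncountable_field:
  assumes "(cardSuc natLeq, r) \<in> ordLeq" shows "\<not> countable (Field r)"
proof
  assume c: "countable (Field r)"
  have "(card_of (Field r), card_of (UNIV::nat set)) \<in> ordLeq" using c unfolding countable_def card_of_ordLeq[symmetric] by auto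
  then have 1: "(card_of (Field r), natLeq) \<in> ordLeq" using card_of_nat ordLeq_ordIso_trans by blast
  have 2: "(card_of (Field (cardSuc natLeq)), card_of (Field r)) \<in> ordLeq" using card_of_mono2 assms by blast
  have 3: "(card_of (Field (cardSuc natLeq)), cardSuc natLeq) \<in> ordIso"
    using card_of_Field_ordIso cardSuc_Card_order natLeq_Card_order by blast
  have 4: "(natLeq, cardSuc natLeq) \<in> ordLess" using cardSuc_greater natLeq_Card_order by blast
  have "(natLeq, card_of (Field r)) \<in> ordLess"
    using 4 3 2 by (meson ordIso_symmetric ordLess_ordIso_trans ordLess_ordLeq_trans)
  then show False using 1 not_ordLess_ordLeq by blast
qed

lemma tree_hom_stage:
  assumes wo: "Well_order r"
    and fT: "\<And>s. s \<in> T \<Longrightarrow> f s \<in> T'"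
    and fp: "\<And>s t. s \<in> T \<Longrightarrow> t \<in> T \<Longrightarrow> strict_prefix s t \<Longrightarrow> strict_prefix (f s) (f t)"
  shows "f ` deriv_iter r T i \<subseteq> deriv_iter r T' i"
proof (induction i rule: wf_induct_rule[OF wf_WO[OF wo]])
  case (1 i)
  show ?case
  proof
    fix u assume "u \<in> f ` deriv_iter r T i"
    then obtain s where s: "s \<in> deriv_iter r T i" "u = f s" by auto
    have sT: "s \<in> T" and sj: "\<And>j. (j, i) \<in> r - Id \<Longrightarrow> s \<in> tree_deriv (deriv_iter r T j)"
      using s(1) stage_mem[OF wo, of s T i] by blast+
    have "u \<in> tree_deriv (deriv_iter r T' j)" if j: "(j, i) \<in> r - Id" for j
    proof -
      have "s \<in> tree_deriv (deriv_iter r T j)" using sj j .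
      then obtain t where t: "t \<in> deriv_iter r T j" "strict_prefix s t" and s2: "s \<in> deriv_iter r T j"
        unfolding tree_deriv_def by auto
      have tT: "t \<in> T" using t(1) stage_sub[OF wo] by blast
      have "f t \<in> deriv_iter r T' j" "f s \<in> deriv_iter r T' j" using 1 j t(1) s2 by auto
      moreover have "strict_prefix (f s) (f t)" using fp sT tT t(2) by auto
      ultimately show ?thesis unfolding tree_deriv_def s(2) by auto
    qed
    moreover have "u \<in> T'" using fT sT s(2) by auto
    ultimately show "u \<in> deriv_iter r T' i" using stage_mem[OF wo, of u T' i] by blast
  qed
qed

lemma tree_hom_rank:
  assumes wo: "Well_order r"
    and fT: "\<And>s. s \<in> T \<Longrightarrow> f s \<in> T'"
    and fp: "\<And>s t. s \<in> T \<Longrightarrow> t \<in> T \<Longrightarrow> strict_prefix s t \<Longrightarrow> strict_prefix (f s) (f t)"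
    and rk: "rank_le T' r"
  shows "rank_le T r"
  unfolding rank_le_def
proof (rule ccontr)
  assume "T \<inter> (\<Inter>j\<in>Field r. tree_deriv (deriv_iter r T j)) \<noteq> {}"
  then obtain s where s0: "s \<in> T \<inter> (\<Inter>j\<in>Field r. tree_deriv (deriv_iter r T j))" by blast
  have sT: "s \<in> T" using s0 by blast
  have sj: "\<And>j. j \<in> Field r \<Longrightarrow> s \<in> tree_deriv (deriv_iter r T j)" using s0 by blast
  have "f s \<in> tree_deriv (deriv_iter r T' j)" if j: "j \<in> Field r" for j
  proof -
    obtain t where t: "t \<in> deriv_iter r T j" "strict_prefix s t" and s2: "s \<in> deriv_iter r T j"
      using sj[OF j] unfolding tree_deriv_def by auto
    have tT: "t \<in> T" using t(1) stage_sub[OF wo] by blast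
    have hs: "f ` deriv_iter r T j \<subseteq> deriv_iter r T' j" by (rule tree_hom_stage[OF wo fT fp])
    have "f t \<in> deriv_iter r T' j" "f s \<in> deriv_iter r T' j"
      using hs t(1) s2 by auto
    moreover have "strict_prefix (f s) (f t)" using fp sT tT t(2) by auto
    ultimately show ?thesis unfolding tree_deriv_def by auto
  qed
  moreover have "f s \<in> T'" using fT sT by blast
  ultimately have "f s \<in> T' \<inter> (\<Inter>j\<in>Field r. tree_deriv (deriv_iter r T' j))" by blast
  then show False using rk unfolding rank_le_def by blast
qed

lemma countable_rank:
  assumes wo: "Well_order r" and unc: "\<not> countable (Field r)" and cS: "countable S"
    and nob: "\<And>A. A \<noteq> {} \<Longrightarrow> A \<subseteq> S \<Longrightarrow> A \<subseteq> tree_deriv A \<Longrightarrow> False"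
  shows "rank_le S r"
  unfolding rank_le_def
proof (rule ccontr)
  let ?st = "deriv_iter r S"
  assume "S \<inter> (\<Inter>j\<in>Field r. tree_deriv (?st j)) \<noteq> {}"
  then obtain s where sj: "\<And>j. j \<in> Field r \<Longrightarrow> s \<in> tree_deriv (?st j)" by auto
  have stS: "?st j \<subseteq> S" for j using stage_sub[OF wo] by blast
  have ex: "\<exists>p. p \<in> ?st j - tree_deriv (?st j)" if j: "j \<in> Field r" for j
  proof (rule ccontr)
    assume "\<not> ?thesis"
    then have "?st j \<subseteq> tree_deriv (?st j)" by auto
    moreover have "?st j \<noteq> {}" using sj[OF j] unfolding tree_deriv_def by auto
    ultimately show False using nob stS by blast
  qed
  define p where "p j = (SOME p. p \<in> ?st j - tree_deriv (?st j))" for j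
  have p: "p j \<in> ?st j - tree_deriv (?st j)" if "j \<in> Field r" for j
    using someI_ex[OF ex[OF that]] unfolding p_def .
  have "inj_on p (Field r)"
  proof (rule inj_onI)
    fix i j assume i: "i \<in> Field r" and j: "j \<in> Field r" and eq: "p i = p j"
    show "i = j"
    proof (rule ccontr)
      assume ne: "i \<noteq> j"
      have lin: "(i, j) \<in> r \<or> (j, i) \<in> r"
        using wo i j ne unfolding well_order_on_def linear_order_on_def total_on_def by auto
      have "(i, j) \<in> r - Id \<Longrightarrow> False"
      proof -
        assume ij: "(i, j) \<in> r - Id"
        have "p j \<in> tree_deriv (?st i)" using p[OF j] ij stage_mem[OF wo, of "p j" S j] by blast
        then show False using p[OF i] eq by auto
      qed
      moreover have "(j, i) \<in> r - Id \<Longrightarrow> False"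
      proof -
        assume ij: "(j, i) \<in> r - Id"
        have "p i \<in> tree_deriv (?st j)" using p[OF i] ij stage_mem[OF wo, of "p i" S i] by blast
        then show False using p[OF j] eq by auto
      qed
      ultimately show False using lin ne by auto
    qed
  qed
  moreover have "p ` Field r \<subseteq> S" using p stS by blast
  ultimately have "countable (Field r)"
    using cS by (meson countable_image_inj_on countable_subset)
  then show False using unc by auto
qed



lemma l1_tree_take:
  assumes "ys \<in> l1_tree \<delta>" shows "take n ys \<in> l1_tree \<delta>"
  unfolding l1_tree_def
proof (intro CollectI allI)
  fix a :: "nat \<Rightarrow> real"
  let ?m = "length (take n ys)"
  define a' where "a' i = (if i < ?m then a i else 0)" for i
  have le: "?m \<le> length ys" by simp
  have e1: "(\<Sum>i<length ys. \<bar>a' i\<bar>) = (\<Sum>i<?m. \<bar>a i\<bar>)"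
  proof -
    have "(\<Sum>i<length ys. \<bar>a' i\<bar>) = (\<Sum>i<?m. \<bar>a' i\<bar>)"
      by (rule sum.mono_neutral_right) (use le in \<open>auto simp: a'_def\<close>)
    also have "\<dots> = (\<Sum>i<?m. \<bar>a i\<bar>)" by (rule sum.cong) (auto simp: a'_def)
    finally show ?thesis .
  qed
  have e2: "(\<Sum>i<length ys. a' i *\<^sub>R ys ! i) = (\<Sum>i<?m. a i *\<^sub>R take n ys ! i)"
  proof -
    have "(\<Sum>i<length ys. a' i *\<^sub>R ys ! i) = (\<Sum>i<?m. a' i *\<^sub>R ys ! i)"
      by (rule sum.mono_neutral_right) (use le in \<open>auto simp: a'_def\<close>)
    also have "\<dots> = (\<Sum>i<?m. a i *\<^sub>R take n ys ! i)" by (rule sum.cong) (auto simp: a'_def)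
    finally show ?thesis .
  qed
  from assms[unfolded l1_tree_def, THEN CollectD, rule_format, of a']
  show "1 / \<delta> * (\<Sum>i<?m. \<bar>a i\<bar>) \<le> norm (\<Sum>i<?m. a i *\<^sub>R take n ys ! i) \<and>
        norm (\<Sum>i<?m. a i *\<^sub>R take n ys ! i) \<le> \<delta> * (\<Sum>i<?m. \<bar>a i\<bar>)"
    unfolding e1 e2 .
qed

lemma map_upt_l1_tree:
  "map x [0..<n] \<in> l1_tree \<delta> \<longleftrightarrow> (\<forall>a::nat\<Rightarrow>real.
      (1/\<delta>) * (\<Sum>i<n. \<bar>a i\<bar>) \<le> norm (\<Sum>i<n. a i *\<^sub>R x i)
    \<and> norm (\<Sum>i<n. a i *\<^sub>R x i) \<le> \<delta> * (\<Sum>i<n. \<bar>a i\<bar>))"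
proof -
  have "(\<Sum>i<n. a i *\<^sub>R map x [0..<n] ! i) = (\<Sum>i<n. a i *\<^sub>R x i)" for a :: "nat \<Rightarrow> real"
    by (rule sum.cong) auto
  then show ?thesis unfolding l1_tree_def by simp
qed

lemma branch_seq:
  assumes ne: "A \<noteq> {}" and AS: "A \<subseteq> S" and Ad: "A \<subseteq> tree_deriv A"
    and tk: "\<And>s n. s \<in> S \<Longrightarrow> take n s \<in> S"
  shows "\<exists>x. \<forall>n. map x [0..<n] \<in> S"
proof -
  obtain s0 where s0: "s0 \<in> A" using ne by auto
  have ext: "\<exists>t. t \<in> A \<and> strict_prefix s t" if "s \<in> A" for s
    using Ad that unfolding tree_deriv_def by auto
  define nxt where "nxt s = (SOME t. t \<in> A \<and> strict_prefix s t)" for s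
  have nxt: "nxt s \<in> A \<and> strict_prefix s (nxt s)" if "s \<in> A" for s
    using someI_ex[OF ext[OF that]] unfolding nxt_def .
  define ch where "ch k = (nxt ^^ k) s0" for k
  have chA: "ch k \<in> A" for k by (induction k) (auto simp: ch_def s0 nxt)
  have chS: "ch (Suc k) = nxt (ch k)" for k by (simp add: ch_def)
  have len: "length (ch k) \<ge> k" for k
  proof (induction k)
    case (Suc k)
    have "strict_prefix (ch k) (ch (Suc k))" using nxt[OF chA[of k]] chS by simp
    then have "length (ch k) < length (ch (Suc k))" by (rule prefix_length_less)
    then show ?case using Suc by simp
  qed simp
  have pre: "prefix (ch k) (ch (k + d))" for k d
  proof (induction d)
    case (Suc d)
    have "strict_prefix (ch (k+d)) (ch (Suc (k+d)))" using nxt[OF chA[of "k+d"]] chS by simp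
    then have "prefix (ch (k+d)) (ch (Suc (k+d)))" by (simp add: strict_prefix_def)
    from prefix_order.trans[OF Suc.IH this] show ?case by simp
  qed simp
  define x where "x i = ch (Suc i) ! i" for i
  have "map x [0..<n] = take n (ch n)" for n
  proof (rule nth_equalityI)
    show "length (map x [0..<n]) = length (take n (ch n))" using len[of n] by simp
    fix i assume "i < length (map x [0..<n])"
    then have i: "i < n" by simp
    from less_imp_Suc_add[OF i] obtain d0 where "n = Suc (i + d0)" by blast
    then obtain d where d: "n = Suc i + d" by simp
    obtain zs where zs: "ch n = ch (Suc i) @ zs" using pre[of "Suc i" d] d by (auto simp: prefix_def)
    have "i < length (ch (Suc i))" using len[of "Suc i"] by simp
    then have "ch n ! i = ch (Suc i) ! i" using zs by (simp add: nth_append)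
    then show "map x [0..<n] ! i = take n (ch n) ! i" using i by (simp add: x_def)
  qed
  moreover have "take n (ch n) \<in> S" for n using tk chA AS by blast
  ultimately have "\<forall>n. map x [0..<n] \<in> S" by simp
  then show ?thesis by blast
qed

lemma branch_l1:
  fixes x :: "nat \<Rightarrow> 'x::banach"
  assumes dpos: "\<delta> > 0" and br: "\<And>n. map x [0..<n] \<in> l1_tree \<delta>"
  shows "contains_l1 TYPE('x)"
proof -
  have B: "(1/\<delta>) * (\<Sum>i<n. \<bar>a i\<bar>) \<le> norm (\<Sum>i<n. a i *\<^sub>R x i)
      \<and> norm (\<Sum>i<n. a i *\<^sub>R x i) \<le> \<delta> * (\<Sum>i<n. \<bar>a i\<bar>)" for n a
    using br[of n] unfolding map_upt_l1_tree by blast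
  have xb: "norm (x i) \<le> \<delta>" for i
  proof -
    define a where "a k = (if k = i then 1 else 0::real)" for k
    have "(\<Sum>k<Suc i. a k *\<^sub>R x k) = x i" by (simp add: a_def if_distrib cong: if_cong)
    moreover have "(\<Sum>k<Suc i. \<bar>a k\<bar>) = 1" by (simp add: a_def if_distrib cong: if_cong)
    ultimately show ?thesis using B[where n="Suc i" and a=a] by simp
  qed
  define E where "E a = (\<Sum>i. a i *\<^sub>R x i)" for a :: "nat \<Rightarrow> real"
  have sm: "summable (\<lambda>i. a i *\<^sub>R x i)" if "a \<in> l1_seqs" for a
  proof (rule summable_comparison_test)
    show "summable (\<lambda>i. \<delta> * \<bar>a i\<bar>)" using that unfolding l1_seqs_def by (simp add: summable_mult)
    show "\<exists>N. \<forall>n\<ge>N. norm (a n *\<^sub>R x n) \<le> \<delta> * \<bar>a n\<bar>"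
      using xb by (auto intro!: exI[of _ 0] simp: mult.commute[of "\<bar>_\<bar>"] mult_right_mono)
  qed
  have bounds: "(1/\<delta>) * l1_norm a \<le> norm (E a) \<and> norm (E a) \<le> \<delta> * l1_norm a" if a: "a \<in> l1_seqs" for a
  proof -
    have t1: "(\<lambda>n. \<Sum>i<n. a i *\<^sub>R x i) \<longlonglongrightarrow> E a"
      unfolding E_def using sm[OF a] summable_LIMSEQ by blast
    then have t1n: "(\<lambda>n. norm (\<Sum>i<n. a i *\<^sub>R x i)) \<longlonglongrightarrow> norm (E a)" by (rule tendsto_norm)
    have t2: "(\<lambda>n. \<Sum>i<n. \<bar>a i\<bar>) \<longlonglongrightarrow> l1_norm a"
      unfolding l1_norm_def using a unfolding l1_seqs_def using summable_LIMSEQ by blast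
    have "(1/\<delta>) * l1_norm a \<le> norm (E a)"
      by (rule LIMSEQ_le[OF tendsto_mult_left[OF t2] t1n]) (use B in auto)
    moreover have "norm (E a) \<le> \<delta> * l1_norm a"
      by (rule LIMSEQ_le[OF t1n tendsto_mult_left[OF t2]]) (use B in auto)
    ultimately show ?thesis by simp
  qed
  show ?thesis
    unfolding contains_l1_def
  proof (intro exI conjI ballI allI)
    show "1/\<delta> > 0" using dpos by simp
    fix a b assume a: "a \<in> l1_seqs" and b: "b \<in> l1_seqs"
    show "E (\<lambda>n. a n + b n) = E a + E b"
      unfolding E_def by (simp add: suminf_add[OF sm[OF a] sm[OF b]] scaleR_add_left)
  next
    fix a c assume a: "a \<in> l1_seqs"
    show "E (\<lambda>n. c * a n) = c *\<^sub>R E a"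
      unfolding E_def using suminf_scaleR_right[OF sm[OF a], of c] by simp
  next
    fix a assume a: "a \<in> l1_seqs"
    show "1/\<delta> * l1_norm a \<le> norm (E a)" using bounds[OF a] by simp
    show "norm (E a) \<le> l1_norm a / (1/\<delta>)" using bounds[OF a] by (simp add: mult.commute)
  qed
qed



lemma om_baire:
  fixes Q :: "'y::banach \<Rightarrow> 'x::banach"
  assumes sQ: "surj Q"
  shows "\<exists>n a \<rho>. \<rho> > 0 \<and> ball a \<rho> \<subseteq> closure (Q ` ball 0 (real n))"
proof (rule ccontr)
  assume H: "\<not> ?thesis"
  define G where "G = range (\<lambda>n::nat. closure (Q ` ball 0 (real n)))"
  have "euclidean interior_of \<Union>G = {}"
  proof (rule Baire_category_alt)
    show "completely_metrizable_space (euclidean :: 'x topology) \<or>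
      locally_compact_space (euclidean :: 'x topology) \<and> regular_space (euclidean :: 'x topology)"
      using completely_metrizable_space_euclidean by blast
    show "countable G" unfolding G_def by simp
    fix T assume "T \<in> G"
    then obtain n where T: "T = closure (Q ` ball 0 (real n))" unfolding G_def by blast
    show "closedin euclidean T \<and> euclidean interior_of T = {}"
    proof
      show "closedin euclidean T" unfolding T by simp
      show "euclidean interior_of T = {}"
      proof (rule ccontr)
        assume "euclidean interior_of T \<noteq> {}"
        then obtain p U where "open U" "p \<in> U" "U \<subseteq> T" unfolding interior_of_def by auto
        then obtain e where "e > 0" "ball p e \<subseteq> U" using open_contains_ball by blast
        then have "ball p e \<subseteq> closure (Q ` ball 0 (real n))"
          using \<open>U \<subseteq> T\<close> T by (meson order.trans)
        then show False using H \<open>e > 0\<close> by blast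
      qed
    qed
  qed
  moreover have "\<Union>G = UNIV"
  proof -
    have "x \<in> \<Union>G" for x
    proof -
      from sQ have "\<exists>y. x = Q y" unfolding surj_def by blast
      then obtain y where y: "Q y = x" by auto
      obtain n :: nat where n: "norm y < real n" using reals_Archimedean2 by blast
      have "x \<in> Q ` ball 0 (real n)" using y n by auto
      then have "x \<in> closure (Q ` ball 0 (real n))" by (rule closure_subset[THEN subsetD])
      then show ?thesis unfolding G_def by blast
    qed
    then show ?thesis by blast
  qed
  ultimately show False
    using interior_of_topspace[of "euclidean :: 'x topology"] by simp
qed

lemma om_step:
  fixes Q :: "'y::banach \<Rightarrow> 'x::banach"
  assumes lQ: "bounded_linear Q" and sQ: "surj Q"
  shows "\<exists>K>0. \<forall>x. \<exists>y. norm y \<le> K * norm x \<and> norm (x - Q y) \<le> norm x / 2"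
proof -
  interpret Q: bounded_linear Q by (rule lQ)
  obtain n a \<rho> where rho: "\<rho> > 0" and B: "ball a \<rho> \<subseteq> closure (Q ` ball 0 (real n))"
    using om_baire[OF sQ] by blast
  have approx: "\<exists>y. norm y < 2 * real n \<and> norm (z - Q y) < e" if z: "norm z < \<rho>" and e: "e > 0" for z e
  proof -
    have "a + z \<in> closure (Q ` ball 0 (real n))" using B z by (auto simp: dist_norm)
    then have "\<forall>\<epsilon>>0. \<exists>w\<in>Q ` ball 0 (real n). dist w (a + z) < \<epsilon>"
      unfolding closure_approachable .
    from this[rule_format, of "e/2"] have "\<exists>w\<in>Q ` ball 0 (real n). dist w (a + z) < e/2"
      using e by simp
    then obtain u where u: "u \<in> ball 0 (real n)" "dist (Q u) (a + z) < e/2" by blast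
    have "a \<in> closure (Q ` ball 0 (real n))" using B rho by auto
    then have "\<forall>\<epsilon>>0. \<exists>w\<in>Q ` ball 0 (real n). dist w a < \<epsilon>"
      unfolding closure_approachable .
    from this[rule_format, of "e/2"] have "\<exists>w\<in>Q ` ball 0 (real n). dist w a < e/2"
      using e by simp
    then obtain v where v: "v \<in> ball 0 (real n)" "dist (Q v) a < e/2" by blast
    have "norm (u - v) \<le> norm u + norm v" by (rule norm_triangle_ineq4)
    then have n1: "norm (u - v) < 2 * real n" using u(1) v(1) by auto
    have eq: "z - Q (u - v) = (a + z - Q u) + (Q v - a)" by (simp add: Q.diff algebra_simps)
    have "norm (z - Q (u - v)) \<le> norm (a + z - Q u) + norm (Q v - a)"
      unfolding eq by (rule norm_triangle_ineq)
    also have "\<dots> < e" using u(2) v(2) by (simp add: dist_norm norm_minus_commute)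
    finally show ?thesis using n1 by blast
  qed
  define K where "K = 4 * real n / \<rho> + 1"
  have Kpos: "K > 0" unfolding K_def using rho by (simp add: add_nonneg_pos)
  have "\<exists>y. norm y \<le> K * norm x \<and> norm (x - Q y) \<le> norm x / 2" for x
  proof (cases "x = 0")
    case True
    then show ?thesis by (intro exI[of _ 0]) simp
  next
    case False
    then have nx: "norm x > 0" by simp
    define c where "c = \<rho> / (2 * norm x)"
    have c: "c > 0" unfolding c_def using rho nx by simp
    have "norm (c *\<^sub>R x) = \<rho> / 2" unfolding c_def using nx rho by simp
    then have "norm (c *\<^sub>R x) < \<rho>" using rho by simp
    then obtain y' where y': "norm y' < 2 * real n" "norm (c *\<^sub>R x - Q y') < \<rho> / 4"
      using approx[of "c *\<^sub>R x" "\<rho>/4"] rho by auto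
    define y where "y = (1/c) *\<^sub>R y'"
    have "x - Q y = (1/c) *\<^sub>R (c *\<^sub>R x - Q y')"
      unfolding y_def using c by (simp add: Q.scaleR algebra_simps)
    then have "norm (x - Q y) = (1/c) * norm (c *\<^sub>R x - Q y')" using c by simp
    also have "\<dots> \<le> (1/c) * (\<rho>/4)" using y'(2) c by (intro mult_left_mono) auto
    also have "\<dots> = norm x / 2" unfolding c_def using rho nx by (simp add: field_simps)
    finally have 1: "norm (x - Q y) \<le> norm x / 2" .
    have "norm y = (1/c) * norm y'" unfolding y_def using c by simp
    also have "\<dots> \<le> (1/c) * (2 * real n)" using y'(1) c by (intro mult_left_mono) auto
    also have "\<dots> = 4 * real n / \<rho> * norm x" unfolding c_def using rho nx by (simp add: field_simps)
    also have "\<dots> \<le> K * norm x" unfolding K_def using nx by (simp add: distrib_right)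
    finally show ?thesis using 1 by blast
  qed
  then show ?thesis using Kpos by blast
qed

lemma open_mapping_lift:
  fixes Q :: "'y::banach \<Rightarrow> 'x::banach"
  assumes lQ: "bounded_linear Q" and sQ: "surj Q"
  shows "\<exists>K>0. \<forall>x. \<exists>y. Q y = x \<and> norm y \<le> K * norm x"
proof -
  interpret Q: bounded_linear Q by (rule lQ)
  obtain K where K: "K > 0" and st: "\<And>x. \<exists>y. norm y \<le> K * norm x \<and> norm (x - Q y) \<le> norm x / 2"
    using om_step[OF lQ sQ] by blast
  define g where "g x = (SOME y. norm y \<le> K * norm x \<and> norm (x - Q y) \<le> norm x / 2)" for x
  have g: "norm (g x) \<le> K * norm x" "norm (x - Q (g x)) \<le> norm x / 2" for x
    using someI_ex[OF st[of x]] unfolding g_def by auto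
  have "\<exists>y. Q y = x \<and> norm y \<le> (2 * K) * norm x" for x
  proof -
    define xs where "xs k = ((\<lambda>z. z - Q (g z)) ^^ k) x" for k
    have xsS: "xs (Suc k) = xs k - Q (g (xs k))" for k by (simp add: xs_def)
    have xsn: "norm (xs k) \<le> norm x * (1/2)^k" for k
    proof (induction k)
      case 0 then show ?case by (simp add: xs_def)
    next
      case (Suc k)
      have "norm (xs (Suc k)) \<le> norm (xs k) / 2" unfolding xsS by (rule g(2))
      also have "\<dots> \<le> norm x * (1/2)^k / 2" using Suc by simp
      finally show ?case by simp
    qed
    have gn: "norm (g (xs k)) \<le> K * norm x * (1/2)^k" for k
    proof -
      have "norm (g (xs k)) \<le> K * norm (xs k)" by (rule g(1))
      also have "\<dots> \<le> K * (norm x * (1/2)^k)" using xsn[of k] K by (intro mult_left_mono) auto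
      finally show ?thesis by simp
    qed
    have geo: "summable (\<lambda>k. K * norm x * (1/2::real)^k)"
      by (intro summable_mult summable_geometric) simp
    have sn: "summable (\<lambda>k. norm (g (xs k)))"
      by (rule summable_comparison_test[OF _ geo]) (use gn in auto)
    have s: "summable (\<lambda>k. g (xs k))" by (rule summable_norm_cancel[OF sn])
    define y where "y = (\<Sum>k. g (xs k))"
    have ps: "Q (\<Sum>k<N. g (xs k)) = x - xs N" for N
    proof (induction N)
      case 0 then show ?case by (simp add: xs_def)
    next
      case (Suc N)
      then show ?case by (simp add: Q.add xsS)
    qed
    have t1: "(\<lambda>N. \<Sum>k<N. g (xs k)) \<longlonglongrightarrow> y" unfolding y_def using s summable_LIMSEQ by blast
    have t2: "(\<lambda>N. Q (\<Sum>k<N. g (xs k))) \<longlonglongrightarrow> Q y" by (rule Q.tendsto[OF t1])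
    have xs0: "xs \<longlonglongrightarrow> 0"
    proof (rule tendsto_norm_zero_cancel)
      have "(\<lambda>k. norm x * (1/2::real)^k) \<longlonglongrightarrow> norm x * 0"
        by (intro tendsto_mult tendsto_const LIMSEQ_power_zero) simp
      then have g0: "(\<lambda>k. norm x * (1/2::real)^k) \<longlonglongrightarrow> 0" by simp
      show "(\<lambda>k. norm (xs k)) \<longlonglongrightarrow> 0"
      proof (rule Lim_null_comparison[OF _ g0])
        show "\<forall>\<^sub>F k in sequentially. norm (norm (xs k)) \<le> norm x * (1/2::real)^k"
          by (rule always_eventually) (simp add: xsn)
      qed
    qed
    have t3: "(\<lambda>N. x - xs N) \<longlonglongrightarrow> x - 0" by (intro tendsto_diff tendsto_const xs0)
    have "Q y = x" using LIMSEQ_unique[OF t2] t3 ps by simp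
    moreover have "norm y \<le> 2 * K * norm x"
    proof -
      have "norm y \<le> (\<Sum>k. norm (g (xs k)))" unfolding y_def by (rule summable_norm[OF sn])
      also have "\<dots> \<le> (\<Sum>k. K * norm x * (1/2::real)^k)"
        by (rule suminf_le[OF _ sn geo]) (use gn in auto)
      also have "\<dots> = K * norm x * (\<Sum>k. (1/2::real)^k)"
        by (rule suminf_mult) (intro summable_geometric, simp)
      also have "\<dots> = 2 * K * norm x" by (simp add: suminf_geometric)
      finally show ?thesis .
    qed
    ultimately show ?thesis by blast
  qed
  then show ?thesis using K by (intro exI[of _ "2*K"]) auto
qed



lemma l1_tree_elem_bound:
  assumes "s \<in> l1_tree \<delta>" "n < length s"
  shows "norm (s ! n) \<le> \<delta>"
proof -
  define a where "a k = (if k = n then 1 else 0::real)" for k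
  have "(\<Sum>k<length s. a k *\<^sub>R s ! k) = (\<Sum>k\<in>{n}. a k *\<^sub>R s ! k)"
    by (rule sum.mono_neutral_right) (use assms(2) in \<open>auto simp: a_def\<close>)
  also have "\<dots> = s ! n" by (simp add: a_def)
  finally have e1: "(\<Sum>k<length s. a k *\<^sub>R s ! k) = s ! n" .
  have "(\<Sum>k<length s. \<bar>a k\<bar>) = (\<Sum>k\<in>{n}. \<bar>a k\<bar>)"
    by (rule sum.mono_neutral_right) (use assms(2) in \<open>auto simp: a_def\<close>)
  also have "\<dots> = 1" by (simp add: a_def)
  finally have e2: "(\<Sum>k<length s. \<bar>a k\<bar>) = 1" .
  from assms(1)[unfolded l1_tree_def, THEN CollectD, rule_format, of a]
  show ?thesis unfolding e1 e2 by simp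
qed

lemma strict_prefix_map:
  assumes "strict_prefix s t" shows "strict_prefix (map f s) (map f t)"
proof -
  have "prefix s t" "length s < length t" using assms prefix_length_less by (auto simp: strict_prefix_def)
  then show ?thesis using map_mono_prefix[of s t f]
    by (auto simp: strict_prefix_def dest: arg_cong[of _ _ length])
qed

lemma lift_tree:
  fixes Q :: "'y::real_normed_vector \<Rightarrow> 'x::real_normed_vector" and L :: "'x \<Rightarrow> 'y"
  assumes lQ: "bounded_linear Q" and Bp: "B > 0" and QB: "\<And>y. norm (Q y) \<le> norm y * B"
    and Kp: "K > 0" and L: "\<And>x. Q (L x) = x \<and> norm (L x) \<le> K * norm x"
    and dp: "\<delta> > 0" and s: "s \<in> l1_tree \<delta>"
  shows "map L s \<in> l1_tree (max 1 (max (\<delta> * B) (K * \<delta>)))"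
  unfolding l1_tree_def
proof (intro CollectI allI conjI)
  interpret Q: bounded_linear Q by (rule lQ)
  fix a :: "nat \<Rightarrow> real"
  let ?d = "max 1 (max (\<delta> * B) (K * \<delta>))"
  let ?n = "length (map L s)"
  have len: "?n = length s" by simp
  let ?S = "\<Sum>i<length s. a i *\<^sub>R map L s ! i"
  let ?A = "\<Sum>i<length s. \<bar>a i\<bar>"
  have Asum: "?A \<ge> 0" by (simp add: sum_nonneg)
  have ts: "1 / \<delta> * ?A \<le> norm (\<Sum>i<length s. a i *\<^sub>R s ! i)"
    using s[unfolded l1_tree_def, THEN CollectD, rule_format, of a] by blast
  have QS: "Q ?S = (\<Sum>i<length s. a i *\<^sub>R s ! i)"
    by (simp add: Q.sum Q.scaleR L)
  have "1 / \<delta> * ?A \<le> norm ?S * B" using ts QS QB[of ?S] by simp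
  then have "1 / (\<delta> * B) * ?A \<le> norm ?S" using Bp dp by (simp add: field_simps)
  moreover have "1 / ?d * ?A \<le> 1 / (\<delta> * B) * ?A"
    using Asum Bp dp by (intro mult_right_mono divide_left_mono) auto
  ultimately show "1 / ?d * (\<Sum>i<?n. \<bar>a i\<bar>) \<le> norm (\<Sum>i<?n. a i *\<^sub>R map L s ! i)"
    unfolding len by linarith
  have "norm ?S \<le> (\<Sum>i<length s. norm (a i *\<^sub>R map L s ! i))" by (rule norm_sum)
  also have "\<dots> \<le> (\<Sum>i<length s. \<bar>a i\<bar> * (K * \<delta>))"
  proof (rule sum_mono)
    fix i assume "i \<in> {..<length s}"
    then have i: "i < length s" by simp
    have "norm (L (s ! i)) \<le> K * norm (s ! i)" using L by blast
    also have "\<dots> \<le> K * \<delta>" using l1_tree_elem_bound[OF s i] Kp by simp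
    finally show "norm (a i *\<^sub>R map L s ! i) \<le> \<bar>a i\<bar> * (K * \<delta>)"
      using i by (simp add: mult_left_mono)
  qed
  also have "\<dots> = ?A * (K * \<delta>)" by (simp add: sum_distrib_right)
  also have "\<dots> \<le> ?A * ?d" using Asum by (intro mult_left_mono) auto
  finally show "norm (\<Sum>i<?n. a i *\<^sub>R map L s ! i) \<le> ?d * (\<Sum>i<?n. \<bar>a i\<bar>)"
    unfolding len by (simp add: mult.commute)
qed

lemma approx_tree:
  fixes d :: "'x::real_normed_vector \<Rightarrow> 'x"
  assumes dp: "\<delta> > 0" and dd: "\<And>x. norm (x - d x) \<le> 1 / (2 * \<delta>)" and s: "s \<in> l1_tree \<delta>"
  shows "map d s \<in> l1_tree (2 * \<delta> + 1 / \<delta>)"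
  unfolding l1_tree_def
proof (intro CollectI allI conjI)
  fix a :: "nat \<Rightarrow> real"
  let ?d = "2 * \<delta> + 1 / \<delta>"
  let ?n = "length (map d s)"
  have len: "?n = length s" by simp
  let ?S = "\<Sum>i<length s. a i *\<^sub>R map d s ! i"
  let ?T = "\<Sum>i<length s. a i *\<^sub>R s ! i"
  let ?A = "\<Sum>i<length s. \<bar>a i\<bar>"
  have Asum: "?A \<ge> 0" by (simp add: sum_nonneg)
  have ts: "1 / \<delta> * ?A \<le> norm ?T" "norm ?T \<le> \<delta> * ?A"
    using s[unfolded l1_tree_def, THEN CollectD, rule_format, of a] by blast+
  have eqTS: "?T - ?S = (\<Sum>i<length s. a i *\<^sub>R (s ! i - d (s ! i)))"
    by (simp add: sum_subtractf[symmetric] scaleR_diff_right)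
  have "norm (?T - ?S) \<le> (\<Sum>i<length s. norm (a i *\<^sub>R (s ! i - d (s ! i))))"
    unfolding eqTS by (rule norm_sum)
  also have "\<dots> \<le> (\<Sum>i<length s. \<bar>a i\<bar> * (1 / (2 * \<delta>)))"
  proof (rule sum_mono)
    fix i
    have "\<bar>a i\<bar> * norm (s ! i - d (s ! i)) \<le> \<bar>a i\<bar> * (1 / (2 * \<delta>))"
      by (rule mult_left_mono[OF dd]) simp
    then show "norm (a i *\<^sub>R (s ! i - d (s ! i))) \<le> \<bar>a i\<bar> * (1 / (2 * \<delta>))" by simp
  qed
  also have "\<dots> = ?A * (1 / (2 * \<delta>))" by (simp add: sum_distrib_right sum_divide_distrib)
  finally have diff: "norm (?T - ?S) \<le> ?A * (1 / (2 * \<delta>))" .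
  have tri1: "norm ?T \<le> norm ?S + norm (?T - ?S)" by (rule norm_triangle_sub)
  have tri2: "norm ?S \<le> norm ?T + norm (?T - ?S)"
    using norm_triangle_sub[of ?S ?T] by (simp add: norm_minus_commute)
  have "1 / \<delta> * ?A - ?A * (1 / (2 * \<delta>)) \<le> norm ?S" using ts(1) tri1 diff by linarith
  moreover have "1 / \<delta> * ?A - ?A * (1 / (2 * \<delta>)) = 1 / (2 * \<delta>) * ?A" using dp by (simp add: field_simps)
  moreover have "1 / ?d * ?A \<le> 1 / (2 * \<delta>) * ?A"
    using Asum dp by (intro mult_right_mono divide_left_mono) (auto simp: add_pos_pos)
  ultimately show "1 / ?d * (\<Sum>i<?n. \<bar>a i\<bar>) \<le> norm (\<Sum>i<?n. a i *\<^sub>R map d s ! i)"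
    unfolding len by linarith
  have "norm ?S \<le> \<delta> * ?A + ?A * (1 / (2 * \<delta>))" using ts(2) tri2 diff by linarith
  moreover have "\<delta> * ?A + ?A * (1 / (2 * \<delta>)) \<le> ?d * ?A"
  proof -
    have "1 / (2 * \<delta>) \<le> 1 / \<delta>" using dp by (simp add: field_simps)
    then have "\<delta> + 1 / (2 * \<delta>) \<le> ?d" using dp by simp
    then have "(\<delta> + 1 / (2 * \<delta>)) * ?A \<le> ?d * ?A" using Asum by (rule mult_right_mono)
    then show ?thesis by (simp add: algebra_simps)
  qed
  ultimately show "norm (\<Sum>i<?n. a i *\<^sub>R map d s ! i) \<le> ?d * (\<Sum>i<?n. \<bar>a i\<bar>)"
    unfolding len by linarith
qed

lemma contains_branch:
  assumes "contains_l1 TYPE('x::real_normed_vector)"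
  shows "\<exists>(x::nat \<Rightarrow> 'x) c. c > 0 \<and> (\<forall>n. map x [0..<n] \<in> l1_tree (1/c))"
proof -
  obtain E :: "(nat \<Rightarrow> real) \<Rightarrow> 'x" and c where cp: "c > 0"
    and add: "\<And>u v. u \<in> l1_seqs \<Longrightarrow> v \<in> l1_seqs \<Longrightarrow> E (\<lambda>n. u n + v n) = E u + E v"
    and hom: "\<And>u a. u \<in> l1_seqs \<Longrightarrow> E (\<lambda>n. a * u n) = a *\<^sub>R E u"
    and bd: "\<And>u. u \<in> l1_seqs \<Longrightarrow> c * l1_norm u \<le> norm (E u) \<and> norm (E u) \<le> l1_norm u / c"
    using assms unfolding contains_l1_def by blast
  define e where "e k = (\<lambda>m::nat. if m = k then 1 else 0::real)" for k :: nat
  define x where "x k = E (e k)" for k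
  define tr where "tr N a = (\<lambda>m. if m < N then a m else (0::real))" for N and a :: "nat \<Rightarrow> real"
  have el: "e k \<in> l1_seqs" for k
    unfolding l1_seqs_def mem_Collect_eq by (rule summable_finite[of "{k}"]) (auto simp: e_def)
  have trl: "tr N a \<in> l1_seqs" for N a
    unfolding l1_seqs_def mem_Collect_eq by (rule summable_finite[of "{..<N}"]) (auto simp: tr_def)
  have Etr: "E (tr N a) = (\<Sum>k<N. a k *\<^sub>R x k)" for N a
  proof (induction N)
    case 0
    have "tr 0 a = (\<lambda>m. 0 * e 0 m)" by (rule ext) (simp add: tr_def)
    then show ?case using hom[OF el[of 0], of 0] by simp
  next
    case (Suc N)
    have "tr (Suc N) a = (\<lambda>m. tr N a m + (\<lambda>m. a N * e N m) m)"
    proof (rule ext)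
      fix m show "tr (Suc N) a m = tr N a m + (\<lambda>m. a N * e N m) m"
        by (cases "m < N"; cases "m = N") (auto simp: tr_def e_def)
    qed
    moreover have "(\<lambda>m. a N * e N m) \<in> l1_seqs"
      unfolding l1_seqs_def mem_Collect_eq by (rule summable_finite[of "{N}"]) (auto simp: e_def)
    ultimately have "E (tr (Suc N) a) = E (tr N a) + E (\<lambda>m. a N * e N m)"
      using add[OF trl] by simp
    also have "\<dots> = (\<Sum>k<N. a k *\<^sub>R x k) + a N *\<^sub>R x N"
      using Suc hom[OF el[of N], of "a N"] unfolding x_def by simp
    finally show ?case by simp
  qed
  have ln: "l1_norm (tr N a) = (\<Sum>k<N. \<bar>a k\<bar>)" for N a
  proof -
    have "l1_norm (tr N a) = (\<Sum>k\<in>{..<N}. \<bar>tr N a k\<bar>)"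
      unfolding l1_norm_def by (rule suminf_finite) (auto simp: tr_def)
    also have "\<dots> = (\<Sum>k<N. \<bar>a k\<bar>)" by (rule sum.cong) (auto simp: tr_def)
    finally show ?thesis .
  qed
  have "map x [0..<n] \<in> l1_tree (1/c)" for n
    unfolding map_upt_l1_tree
  proof
    fix a :: "nat \<Rightarrow> real"
    have "c * (\<Sum>k<n. \<bar>a k\<bar>) \<le> norm (\<Sum>k<n. a k *\<^sub>R x k) \<and> norm (\<Sum>k<n. a k *\<^sub>R x k) \<le> (\<Sum>k<n. \<bar>a k\<bar>) / c"
      using bd[OF trl[of n a]] unfolding Etr ln .
    then show "1 / (1 / c) * (\<Sum>i<n. \<bar>a i\<bar>) \<le> norm (\<Sum>i<n. a i *\<^sub>R x i) \<and>
         norm (\<Sum>i<n. a i *\<^sub>R x i) \<le> 1 / c * (\<Sum>i<n. \<bar>a i\<bar>)" by simp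
  qed
  then show ?thesis using cp by blast
qed

theorem lemma10:
  fixes Q :: "'y::banach \<Rightarrow> 'x::banach" and r :: "'i rel"
  assumes "separable_space (euclidean :: 'x topology)"
    and "separable_space (euclidean :: 'y topology)"
    and "bounded_linear Q" and "surj Q"
    and "Well_order r"
    and "phi_l1_le TYPE('y) r"
  shows "phi_l1_le TYPE('x) r"
proof -
  note sepX = assms(1) and lQ = assms(3) and sQ = assms(4) and wo = assms(5) and phY = assms(6)
  interpret Q: bounded_linear Q by (rule lQ)
  obtain B where Bp: "B > 0" and QB: "\<And>y. norm (Q y) \<le> norm y * B" using Q.pos_bounded by blast
  obtain K where Kp: "K > 0" and lift: "\<And>x. \<exists>y. Q y = x \<and> norm y \<le> K * norm x"
    using open_mapping_lift[OF lQ sQ] by blast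
  define L where "L x = (SOME y. Q y = x \<and> norm y \<le> K * norm x)" for x
  have L: "Q (L x) = x \<and> norm (L x) \<le> K * norm x" for x
    using someI_ex[OF lift[of x]] unfolding L_def .
  have liftT: "map L s \<in> (l1_tree (max 1 (max (\<delta> * B) (K * \<delta>))) :: 'y list set)"
    if "\<delta> > 0" "s \<in> l1_tree \<delta>" for \<delta> s
    by (rule lift_tree[OF lQ Bp QB Kp L that])
  show ?thesis
  proof (cases "contains_l1 TYPE('x)")
    case True
    then obtain x :: "nat \<Rightarrow> 'x" and c where cp: "c > 0" and br: "\<And>n. map x [0..<n] \<in> l1_tree (1/c)"
      using contains_branch by blast
    let ?d = "max 1 (max (1/c * B) (K * (1/c)))"
    have "map (L \<circ> x) [0..<n] \<in> l1_tree ?d" for n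
      using liftT[of "1/c" "map x [0..<n]"] br[of n] cp by simp
    then have "contains_l1 TYPE('y)" by (intro branch_l1[of ?d "L \<circ> x"]) auto
    then have "(cardSuc natLeq, r) \<in> ordLeq" using phY unfolding phi_l1_le_def by simp
    then show ?thesis using True unfolding phi_l1_le_def by simp
  next
    case nX: False
    have goal: "rank_le (l1_tree \<delta> :: 'x list set) r" if d1: "\<delta> \<ge> 1" for \<delta>
    proof (cases "contains_l1 TYPE('y)")
      case False
      let ?d = "max 1 (max (\<delta> * B) (K * \<delta>))"
      have rY: "rank_le (l1_tree ?d :: 'y list set) r" using phY False d1 unfolding phi_l1_le_def by simp
      show ?thesis
      proof (rule tree_hom_rank[OF wo _ _ rY, where f = "map L"])
        fix s assume "s \<in> (l1_tree \<delta> :: 'x list set)"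
        then show "map L s \<in> l1_tree ?d" using liftT[of \<delta> s] d1 by simp
      next
        fix s t :: "'x list" assume "strict_prefix s t"
        then show "strict_prefix (map L s) (map L t)" by (rule strict_prefix_map)
      qed
    next
      case True
      then have "(cardSuc natLeq, r) \<in> ordLeq" using phY unfolding phi_l1_le_def by simp
      then have unc: "\<not> countable (Field r)" by (rule uncountable_field)
      obtain D :: "'x set" where cD: "countable D" and clD: "closure D = UNIV"
        using sepX unfolding separable_space_def by auto
      have dp: "\<delta> > 0" using d1 by simp
      have exd: "\<exists>y. y \<in> D \<and> dist y x < 1 / (2 * \<delta>)" for x
      proof -
        have "x \<in> closure D" using clD by simp
        then have "\<forall>e>0. \<exists>y\<in>D. dist y x < e" unfolding closure_approachable .
        from this[rule_format, of "1 / (2 * \<delta>)"] show ?thesis using dp by auto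
      qed
      define d where "d x = (SOME y. y \<in> D \<and> dist y x < 1 / (2 * \<delta>))" for x
      have dD: "d x \<in> D" and dd0: "dist (d x) x < 1 / (2 * \<delta>)" for x
        using someI_ex[OF exd[of x]] unfolding d_def by auto
      have dd: "norm (x - d x) \<le> 1 / (2 * \<delta>)" for x
        using dd0[of x] by (simp add: dist_norm norm_minus_commute)
      let ?d = "2 * \<delta> + 1 / \<delta>"
      have d'p: "?d > 0" using dp by (simp add: add_pos_pos)
      define S where "S = (l1_tree ?d :: 'x list set) \<inter> lists D"
      have cS: "countable S" unfolding S_def using cD by (intro countable_subset[OF _ countable_lists]) auto
      have rS: "rank_le S r"
      proof (rule countable_rank[OF wo unc cS])
        fix A assume A: "A \<noteq> {}" "A \<subseteq> S" "A \<subseteq> tree_deriv A"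
        have "A \<subseteq> l1_tree ?d" using A(2) unfolding S_def by blast
        then obtain x :: "nat \<Rightarrow> 'x" where "\<forall>n. map x [0..<n] \<in> l1_tree ?d"
          using branch_seq[OF A(1) _ A(3), of "l1_tree ?d"] l1_tree_take by blast
        then have "contains_l1 TYPE('x)" using branch_l1[OF d'p] by blast
        then show False using nX by simp
      qed
      show ?thesis
      proof (rule tree_hom_rank[OF wo _ _ rS, where f = "map d"])
        fix s assume "s \<in> (l1_tree \<delta> :: 'x list set)"
        then have "map d s \<in> l1_tree ?d" by (rule approx_tree[OF dp dd])
        moreover have "map d s \<in> lists D" using dD by auto
        ultimately show "map d s \<in> S" unfolding S_def by blast
      next
        fix s t :: "'x list" assume "strict_prefix s t"
        then show "strict_prefix (map d s) (map d t)" by (rule strict_prefix_map)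
      qed
    qed
    then show ?thesis using nX unfolding phi_l1_le_def by simp
  qed
qed

end
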